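(* There exists a function $f:\mathbb{N}\times\mathbb{N}\to\mathbb{N}$ such that for every $m\in\mathbb{N}$, every $x\in\mathbb{R}^m$ with $|\mathrm{set}(x)|\le r$, and every $\ell\in\mathbb{N}$, there exists $y\in\mathbb{R}^{f(r,\ell)}$ with $D_{(y,\ell)}=D_{(x,\ell)}$ and $\mathrm{set}(x)=\mathrm{set}(y)$, and in particular $d_{dF}(x,q)=d_{dF}(y,q)$ for every $q\in\mathbb{R}^\ell$.
   Context: A time series of complexity $m$ is a vector in $\mathbb{R}^m$; $\mathrm{set}(x)$ is the set of entries of $x$, and $\mathrm{rank}_x(z)$ is the rank of $z\in\mathrm{set}(x)$ in $\mathrm{set}(x)$ (ordered increasingly). For $x\in\mathbb{R}^m$ and $y\in\mathbb{R}^\ell$, a traversal is a sequence of index pairs $(i,j)\in[m]\times[\ell]$ starting at $(1,1)$, ending at $(m,\ell)$, in which each pair $(i,j)$ is followed by one of $(i,j+1)$, $(i+1,j)$, $(i+1,j+1)$; $x_i$ and $y_j$ are matched if $(i,j)$ occurs in it. The discrete Fréchet distance $d_{dF}(x,y)$ is the minimum over all traversals $T$ of $\max_{(i,j)\in T}|x_i-y_j|$. For a traversal $M$ of $x$ with a time series of complexity $\ell$, the traversal sectors are $S^{(x,M)}_j=\{x_i: x_i \text{ matched with the } j\text{-th vertex by } M\}$, $j\in[\ell]$, and the $\ell$-profile of $(x,M)$ is $\big((\mathrm{rank}_x(\min S^{(x,M)}_j),\mathrm{rank}_x(\max S^{(x,M)}_j))\big)_{j=1}^{\ell}$. $D_{(x,\ell)}$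 is the set of all $\ell$-profiles of $(x,M)$ over all such traversals $M$. *)

theory Defs
  imports Complex_Main
begin

text \<open>Time series of complexity m are real lists of length m; indices are 0-based,
  so index i of a list corresponds to index i+1 of the paper.\<close>

definition trav_step :: "nat \<times> nat \<Rightarrow> nat \<times> nat \<Rightarrow> bool" where
  "trav_step p q \<longleftrightarrow> q = (fst p, snd p + 1) \<or> q = (fst p + 1, snd p) \<or> q = (fst p + 1, snd p + 1)"

definition traversal :: "nat \<Rightarrow> nat \<Rightarrow> (nat \<times> nat) list \<Rightarrow> bool" where
  "traversal m l T \<longleftrightarrow> 0 < m \<and> 0 < l \<and> T \<noteq> [] \<and> hd T = (0, 0) \<and> last T = (m - 1, l - 1) \<and>
     (\<forall>k. Suc k < length T \<longrightarrow> trav_step (T ! k) (T ! Suc k))"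

definition dF :: "real list \<Rightarrow> real list \<Rightarrow> real" where
  "dF x y = Inf ((\<lambda>T. Max ((\<lambda>(i, j). \<bar>x ! i - y ! j\<bar>) ` set T)) `
              {T. traversal (length x) (length y) T})"

definition rank :: "real list \<Rightarrow> real \<Rightarrow> nat" where
  "rank x z = card {w \<in> set x. w \<le> z}"

definition sector :: "real list \<Rightarrow> (nat \<times> nat) list \<Rightarrow> nat \<Rightarrow> real set" where
  "sector x M j = {x ! i | i. (i, j) \<in> set M}"

definition profile :: "real list \<Rightarrow> nat \<Rightarrow> (nat \<times> nat) list \<Rightarrow> (nat \<times> nat) list" where
  "profile x l M = map (\<lambda>j. (rank x (Min (sector x M j)), rank x (Max (sector x M j)))) [0..<l]"

definition profiles :: "real list \<Rightarrow> nat \<Rightarrow> (nat \<times> nat) list set" where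
  "profiles x l = {profile x l M | M. traversal (length x) l M}"

end

theory Submission
  imports Defs
begin

lemma trav_iff: "traversal m l T \<longleftrightarrow> 0 < m \<and> 0 < l \<and> T \<noteq> [] \<and> hd T = (0, 0) \<and> last T = (m - 1, l - 1) \<and> successively trav_step T"
  unfolding traversal_def successively_conv_nth by blast

lemma succ_le_last:
  fixes T :: "(nat \<times> nat) list"
  assumes "successively (\<lambda>p q. fst p \<le> fst q \<and> snd p \<le> snd q) T" "p \<in> set T"
  shows "fst p \<le> fst (last T) \<and> snd p \<le> snd (last T)"
  using assms
proof (induction T arbitrary: p)
  case Nil then show ?case by simp
next
  case (Cons a T)
  show ?case
  proof (cases "T = []")
    case True then show ?thesis using Cons by simp
  next
    case False
    then have s: "successively (\<lambda>p q. fst p \<le> fst q \<and> snd p \<le> snd q) T"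
      and h: "fst a \<le> fst (hd T) \<and> snd a \<le> snd (hd T)"
      using Cons.prems(1) by (auto simp: successively_Cons)
    have hl: "fst (hd T) \<le> fst (last T) \<and> snd (hd T) \<le> snd (last T)"
      using Cons.IH[OF s, of "hd T"] False by simp
    have "p = a \<or> p \<in> set T" using Cons.prems(2) by simp
    then show ?thesis
    proof
      assume "p = a" then show ?thesis using h hl last_ConsR[OF False] by (metis le_trans)
    next
      assume "p \<in> set T" then show ?thesis using Cons.IH[OF s] False by (simp add: last_ConsR[OF False])
    qed
  qed
qed

lemma trav_bounds:
  assumes "traversal m l T" "(i, j) \<in> set T"
  shows "i < m \<and> j < l"
proof -
  have s: "successively trav_step T" and L: "last T = (m - 1, l - 1)" and ml: "0 < m" "0 < l"
    using assms(1) by (auto simp: trav_iff)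
  have "successively (\<lambda>p q. fst p \<le> fst q \<and> snd p \<le> snd q) T"
    by (rule successively_mono[OF s]) (auto simp: trav_step_def)
  from succ_le_last[OF this assms(2)] L ml show ?thesis by auto
qed

lemma succ_hit:
  fixes g :: "'a \<Rightarrow> nat"
  assumes "successively (\<lambda>p q. g q \<le> g p + 1) T" "T \<noteq> []" "g (hd T) \<le> j" "j \<le> g (last T)"
  shows "\<exists>p\<in>set T. g p = j"
  using assms
proof (induction T)
  case Nil then show ?case by simp
next
  case (Cons a T)
  show ?case
  proof (cases "g a = j")
    case True then show ?thesis by simp
  next
    case False
    then have T: "T \<noteq> []" using Cons.prems by auto
    then have s: "successively (\<lambda>p q. g q \<le> g p + 1) T" and h: "g (hd T) \<le> g a + 1"
      using Cons.prems(1) by (auto simp: successively_Cons)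
    have "\<exists>p\<in>set T. g p = j"
      using Cons.IH[OF s T] h False Cons.prems T by auto
    then show ?thesis by auto
  qed
qed

lemma trav_hit:
  assumes "traversal m l T" "j < l"
  shows "\<exists>i. (i, j) \<in> set T"
proof -
  have s: "successively trav_step T" and L: "last T = (m - 1, l - 1)" and H: "hd T = (0,0)" and ne: "T \<noteq> []"
    using assms(1) by (auto simp: trav_iff)
  have ss: "successively (\<lambda>p q. snd q \<le> snd p + 1) T"
    by (rule successively_mono[OF s]) (auto simp: trav_step_def)
  have "\<exists>p\<in>set T. snd p = j" using succ_hit[OF ss ne, of j] H L assms(2) by auto
  then obtain p where "p \<in> set T" "snd p = j" by blast
  then show ?thesis by (metis prod.collapse)
qed

lemma rank_le_iff:
  assumes "z \<in> set x" "z' \<in> set x"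
  shows "rank x z \<le> rank x z' \<longleftrightarrow> z \<le> z'"
proof
  assume "z \<le> z'"
  then show "rank x z \<le> rank x z'" unfolding rank_def
    by (intro card_mono) auto
next
  assume r: "rank x z \<le> rank x z'"
  show "z \<le> z'"
  proof (rule ccontr)
    assume "\<not> z \<le> z'"
    then have "{w \<in> set x. w \<le> z'} \<subset> {w \<in> set x. w \<le> z}" using assms by auto
    then have "rank x z' < rank x z" unfolding rank_def by (intro psubset_card_mono) auto
    then show False using r by simp
  qed
qed

lemma rank_less_iff:
  assumes "z \<in> set x" "z' \<in> set x"
  shows "rank x z < rank x z' \<longleftrightarrow> z < z'"
  using rank_le_iff[OF assms(2,1)] by linarith

lemma rank_inj:
  assumes "z \<in> set x" "z' \<in> set x" "rank x z = rank x z'"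
  shows "z = z'"
  using rank_le_iff[OF assms(1,2)] rank_le_iff[OF assms(2,1)] assms(3) by simp

lemma rank_bounds: "z \<in> set x \<Longrightarrow> 1 \<le> rank x z \<and> rank x z \<le> card (set x)"
  unfolding rank_def
proof
  assume "z \<in> set x"
  then have "z \<in> {w \<in> set x. w \<le> z}" by simp
  then show "1 \<le> card {w \<in> set x. w \<le> z}"
    by (metis (no_types, lifting) One_nat_def Suc_leI card_gt_0_iff empty_iff finite_set finite_subset mem_Collect_eq subsetI)
  show "card {w \<in> set x. w \<le> z} \<le> card (set x)" by (intro card_mono) auto
qed

definition invr :: "real set \<Rightarrow> nat \<Rightarrow> real" where
  "invr S k = (THE z. z \<in> S \<and> card {w\<in>S. w \<le> z} = k)"

lemma invr_rank: "z \<in> set x \<Longrightarrow> invr (set x) (rank x z) = z"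
  unfolding invr_def
  apply (rule the_equality)
   apply (simp add: rank_def)
  using rank_inj unfolding rank_def by blast

definition cost :: "real list \<Rightarrow> real list \<Rightarrow> (nat \<times> nat) list \<Rightarrow> real" where
  "cost x q T = Max ((\<lambda>(i, j). \<bar>x ! i - q ! j\<bar>) ` set T)"

definition CC :: "real set \<Rightarrow> real list \<Rightarrow> (nat \<times> nat) list \<Rightarrow> real" where
  "CC S q p = Max ((\<lambda>j. max \<bar>invr S (fst (p ! j)) - q ! j\<bar> \<bar>invr S (snd (p ! j)) - q ! j\<bar>) ` {0..<length q})"

lemma sector_props:
  assumes "traversal (length x) l T" "j < l"
  shows "finite (sector x T j) \<and> sector x T j \<noteq> {} \<and> sector x T j \<subseteq> set x"
proof -
  have "sector x T j = (\<lambda>p. x ! fst p) ` {p \<in> set T. snd p = j}"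
    unfolding sector_def by force
  then have f: "finite (sector x T j)" by simp
  obtain i where "(i, j) \<in> set T" using trav_hit[OF assms] by blast
  then have "x ! i \<in> sector x T j" unfolding sector_def by blast
  moreover have "sector x T j \<subseteq> set x" unfolding sector_def using trav_bounds[OF assms(1)] by auto
  ultimately show ?thesis using f by blast
qed

lemma cost_eq:
  assumes T: "traversal (length x) (length q) T"
  shows "cost x q T = CC (set x) q (profile x (length q) T)"
proof -
  let ?l = "length q"
  define S where "S j = sector x T j" for j
  have Sp: "finite (S j) \<and> S j \<noteq> {} \<and> S j \<subseteq> set x" if "j < ?l" for j
    using sector_props[OF T that] S_def by simp
  have pj: "profile x ?l T ! j = (rank x (Min (S j)), rank x (Max (S j)))" if "j < ?l" for j
    using that unfolding profile_def S_def by simp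
  have inv1: "invr (set x) (fst (profile x ?l T ! j)) = Min (S j)"
   and inv2: "invr (set x) (snd (profile x ?l T ! j)) = Max (S j)" if "j < ?l" for j
  proof -
    have "Min (S j) \<in> set x" "Max (S j) \<in> set x" using Sp[OF that] Min_in Max_in by blast+
    then show "invr (set x) (fst (profile x ?l T ! j)) = Min (S j)"
      "invr (set x) (snd (profile x ?l T ! j)) = Max (S j)"
      using pj[OF that] invr_rank by simp_all
  qed
  have CCe: "CC (set x) q (profile x ?l T) = Max ((\<lambda>j. max \<bar>Min (S j) - q ! j\<bar> \<bar>Max (S j) - q ! j\<bar>) ` {0..<?l})"
    unfolding CC_def length_map
    by (intro arg_cong[where f=Max] image_cong) (simp_all add: inv1 inv2)
  have l0: "0 < ?l" using T by (simp add: trav_iff)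
  have fT: "finite ((\<lambda>(i, j). \<bar>x ! i - q ! j\<bar>) ` set T)" by simp
  have neT: "(\<lambda>(i, j). \<bar>x ! i - q ! j\<bar>) ` set T \<noteq> {}" using T by (simp add: trav_iff)
  have ne2: "(\<lambda>j. max \<bar>Min (S j) - q ! j\<bar> \<bar>Max (S j) - q ! j\<bar>) ` {0..<?l} \<noteq> {}" using l0 by simp
  show ?thesis
  proof (rule antisym)
    show "cost x q T \<le> CC (set x) q (profile x ?l T)"
      unfolding cost_def CCe
    proof (subst Max_le_iff[OF fT neT], safe)
      fix i j assume ij: "(i, j) \<in> set T"
      then have jl: "j < ?l" using trav_bounds[OF T] by blast
      have xi: "x ! i \<in> S j" using ij unfolding S_def sector_def by blast
      have "Min (S j) \<le> x ! i" "x ! i \<le> Max (S j)" using xi Sp[OF jl] by auto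
      then have "\<bar>x ! i - q ! j\<bar> \<le> max \<bar>Min (S j) - q ! j\<bar> \<bar>Max (S j) - q ! j\<bar>" by linarith
      also have "\<dots> \<le> Max ((\<lambda>j. max \<bar>Min (S j) - q ! j\<bar> \<bar>Max (S j) - q ! j\<bar>) ` {0..<?l})"
        using jl by (intro Max_ge) auto
      finally show "\<bar>x ! i - q ! j\<bar> \<le> Max ((\<lambda>j. max \<bar>Min (S j) - q ! j\<bar> \<bar>Max (S j) - q ! j\<bar>) ` {0..<?l})" .
    qed
  next
    show "CC (set x) q (profile x ?l T) \<le> cost x q T"
      unfolding cost_def CCe
    proof (subst Max_le_iff, simp, fact ne2, safe)
      fix j assume "j \<in> {0..<?l}"
      then have jl: "j < ?l" by simp
      have "Min (S j) \<in> S j" "Max (S j) \<in> S j" using Sp[OF jl] by auto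
      then obtain i1 i2 where i1: "(i1, j) \<in> set T" "Min (S j) = x ! i1"
        and i2: "(i2, j) \<in> set T" "Max (S j) = x ! i2" unfolding S_def sector_def by blast
      have "\<bar>Min (S j) - q ! j\<bar> \<le> Max ((\<lambda>(i, j). \<bar>x ! i - q ! j\<bar>) ` set T)"
        using i1 by (intro Max_ge) force+
      moreover have "\<bar>Max (S j) - q ! j\<bar> \<le> Max ((\<lambda>(i, j). \<bar>x ! i - q ! j\<bar>) ` set T)"
        using i2 by (intro Max_ge) force+
      ultimately show "max \<bar>Min (S j) - q ! j\<bar> \<bar>Max (S j) - q ! j\<bar> \<le> Max ((\<lambda>(i, j). \<bar>x ! i - q ! j\<bar>) ` set T)"
        by simp
    qed
  qed
qed

lemma dF_profiles: "dF x q = Inf (CC (set x) q ` profiles x (length q))"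
proof -
  have p: "profiles x (length q) = profile x (length q) ` {T. traversal (length x) (length q) T}"
    unfolding profiles_def by blast
  have "(\<lambda>T. Max ((\<lambda>(i, j). \<bar>x ! i - q ! j\<bar>) ` set T)) ` {T. traversal (length x) (length q) T}
        = (\<lambda>T. CC (set x) q (profile x (length q) T)) ` {T. traversal (length x) (length q) T}"
    by (rule image_cong[OF refl]) (simp add: cost_eq[unfolded cost_def])
  also have "\<dots> = CC (set x) q ` profiles x (length q)"
    unfolding p image_image ..
  finally show ?thesis unfolding dF_def by simp
qed

lemma dF_eq:
  assumes "set x = set y" "profiles x l = profiles y l" "length q = l"
  shows "dF x q = dF y q"
  using assms by (simp add: dF_profiles)

lemma Min_img:
  fixes g :: "real \<Rightarrow> real"
  assumes "finite S" "S \<noteq> {}" "\<forall>a\<in>S. \<forall>b\<in>S. a \<le> b \<longrightarrow> g a \<le> g b"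
  shows "Min (g ` S) = g (Min S)" "Max (g ` S) = g (Max S)"
proof -
  have i1: "Min S \<in> S" and i2: "Max S \<in> S" using assms by auto
  have b: "\<And>a. a \<in> S \<Longrightarrow> Min S \<le> a \<and> a \<le> Max S" using assms by auto
  have "\<And>y. y \<in> g ` S \<Longrightarrow> g (Min S) \<le> y" using assms(3) i1 b by blast
  moreover have "g (Min S) \<in> g ` S" using i1 by blast
  ultimately show "Min (g ` S) = g (Min S)" using assms(1) by (intro Min_eqI) auto
  have "\<And>y. y \<in> g ` S \<Longrightarrow> y \<le> g (Max S)" using assms(3) i2 b by blast
  moreover have "g (Max S) \<in> g ` S" using i2 by blast
  ultimately show "Max (g ` S) = g (Max S)" using assms(1) by (intro Max_eqI) auto
qed

lemma prof_map:
  fixes g :: "real \<Rightarrow> real"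
  assumes sm: "\<forall>a\<in>set x. \<forall>b\<in>set x. a < b \<longrightarrow> g a < g b"
  shows "profiles (map g x) l = profiles x l"
proof -
  have le: "g a \<le> g b \<longleftrightarrow> a \<le> b" if "a \<in> set x" "b \<in> set x" for a b
    using sm that by (metis less_le_not_le nle_le)
  have inj: "inj_on g (set x)" unfolding inj_on_def by (metis le order_antisym order_refl)
  have rk: "rank (map g x) (g z) = rank x z" if "z \<in> set x" for z
  proof -
    have "{w \<in> set (map g x). w \<le> g z} = g ` {w \<in> set x. w \<le> z}"
      using le that by auto
    then show ?thesis unfolding rank_def
      by (simp add: card_image inj_on_subset[OF inj])
  qed
  have pe: "profile (map g x) l M = profile x l M" if M: "traversal (length x) l M" for M
    unfolding profile_def
  proof (rule map_cong[OF refl])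
    fix j assume "j \<in> set [0..<l]"
    then have jl: "j < l" by simp
    have sec: "sector (map g x) M j = g ` sector x M j"
      unfolding sector_def using trav_bounds[OF M] by force
    have Sp: "finite (sector x M j) \<and> sector x M j \<noteq> {} \<and> sector x M j \<subseteq> set x"
      using sector_props[OF M jl] .
    have mono: "\<forall>a\<in>sector x M j. \<forall>b\<in>sector x M j. a \<le> b \<longrightarrow> g a \<le> g b"
      using Sp le by blast
    have "Min (sector x M j) \<in> set x" "Max (sector x M j) \<in> set x" using Sp Min_in Max_in by blast+
    show "(rank (map g x) (Min (sector (map g x) M j)), rank (map g x) (Max (sector (map g x) M j))) =
          (rank x (Min (sector x M j)), rank x (Max (sector x M j)))"
    proof -
      have "Min (g ` sector x M j) = g (Min (sector x M j))" "Max (g ` sector x M j) = g (Max (sector x M j))"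
        using Min_img[OF _ _ mono] Sp by auto
      then show ?thesis unfolding sec using rk \<open>Min (sector x M j) \<in> set x\<close> \<open>Max (sector x M j) \<in> set x\<close> by simp
    qed
  qed
  show ?thesis unfolding profiles_def using pe by (auto simp: length_map) (metis pe)+
qed

lemma profile_cong:
  assumes "set x = set y" "\<And>j. j < l \<Longrightarrow> sector x M j = sector y M' j"
  shows "profile x l M = profile y l M'"
  unfolding profile_def rank_def using assms by simp

lemma dup1:
  assumes T: "traversal (length (a # t)) l T"
  defines "T' \<equiv> (0, 0) # map (\<lambda>(i, j). (Suc i, j)) T"
  shows "traversal (length (a # a # t)) l T' \<and> profile (a # a # t) l T' = profile (a # t) l T"
proof
  have ne: "T \<noteq> []" and h: "hd T = (0,0)" and lst: "last T = (length t, l - 1)" and l0: "0 < l"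
    and s: "successively trav_step T" using T by (auto simp: trav_iff)
  have "successively trav_step (map (\<lambda>(i, j). (Suc i, j)) T)"
    unfolding successively_map
    by (rule successively_mono[OF s]) (auto simp: trav_step_def)
  moreover have "trav_step (0,0) (hd (map (\<lambda>(i, j). (Suc i, j)) T))"
    using h ne by (simp add: hd_map trav_step_def)
  ultimately have "successively trav_step T'" unfolding T'_def using ne
    by (simp add: successively_Cons)
  moreover have "last T' = (Suc (length t), l - 1)" unfolding T'_def using ne lst
    by (simp add: last_map)
  ultimately show "traversal (length (a # a # t)) l T'"
    unfolding trav_iff T'_def using l0 by simp
  show "profile (a # a # t) l T' = profile (a # t) l T"
  proof (rule profile_cong)
    show "set (a # a # t) = set (a # t)" by simp
    fix j assume "j < l"
    have "(0, 0) \<in> set T" using h ne by (metis list.set_sel(1))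
    then have a0: "a \<in> sector (a # t) T 0" unfolding sector_def by force
    have sT: "set T' = insert (0, 0) ((\<lambda>(i, j). (Suc i, j)) ` set T)" unfolding T'_def by simp
    show "sector (a # a # t) T' j = sector (a # t) T j"
    proof (intro equalityI subsetI)
      fix v assume "v \<in> sector (a # a # t) T' j"
      then obtain i where v: "v = (a # a # t) ! i" "(i, j) \<in> set T'" unfolding sector_def by blast
      then have "(i, j) = (0, 0) \<or> (\<exists>i'. i = Suc i' \<and> (i', j) \<in> set T)" unfolding sT by auto
      then show "v \<in> sector (a # t) T j"
      proof
        assume "(i, j) = (0, 0)" then show ?thesis using v a0 by simp
      next
        assume "\<exists>i'. i = Suc i' \<and> (i', j) \<in> set T"
        then obtain i' where "i = Suc i'" "(i', j) \<in> set T" by blast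
        then show ?thesis using v unfolding sector_def by auto
      qed
    next
      fix v assume "v \<in> sector (a # t) T j"
      then obtain i where v: "v = (a # t) ! i" "(i, j) \<in> set T" unfolding sector_def by blast
      then have "(Suc i, j) \<in> set T'" unfolding sT by force
      moreover have "v = (a # a # t) ! Suc i" using v by simp
      ultimately show "v \<in> sector (a # a # t) T' j" unfolding sector_def by blast
    qed
  qed
qed

lemma step_pred:
  assumes "trav_step p q"
  shows "(\<lambda>(i, j). (i - 1, j)) p = (\<lambda>(i, j). ((i::nat) - 1, j::nat)) q \<or>
         trav_step ((\<lambda>(i, j). (i - 1, j)) p) ((\<lambda>(i, j). (i - 1, j)) q)"
proof -
  obtain i j where p: "p = (i, j)" by (cases p)
  from assms p have "q = (i, j + 1) \<or> q = (i + 1, j) \<or> q = (i + 1, j + 1)"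
    by (simp add: trav_step_def)
  then show ?thesis
  proof (elim disjE)
    assume "q = (i, j + 1)" then show ?thesis using p by (simp add: trav_step_def)
  next
    assume q: "q = (i + 1, j)" show ?thesis
    proof (cases i)
      case 0 then show ?thesis using p q by simp
    next
      case (Suc k) then show ?thesis using p q by (simp add: trav_step_def)
    qed
  next
    assume q: "q = (i + 1, j + 1)" show ?thesis
    proof (cases i)
      case 0 then show ?thesis using p q by (simp add: trav_step_def)
    next
      case (Suc k) then show ?thesis using p q by (simp add: trav_step_def)
    qed
  qed
qed

lemma dup2:
  assumes T': "traversal (length (a # a # t)) l T'"
  defines "T \<equiv> remdups_adj (map (\<lambda>(i, j). (i - 1, j)) T')"
  shows "traversal (length (a # t)) l T \<and> profile (a # t) l T = profile (a # a # t) l T'"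
proof
  have ne: "T' \<noteq> []" and h: "hd T' = (0,0)" and lst: "last T' = (Suc (length t), l - 1)" and l0: "0 < l"
    and s: "successively trav_step T'" using T' by (auto simp: trav_iff)
  have "successively (\<lambda>p q. p = q \<or> trav_step p q) (map (\<lambda>(i, j). (i - 1, j)) T')"
    unfolding successively_map
    by (rule successively_mono[OF s]) (rule step_pred)
  then have s2: "successively (\<lambda>p q. p = q \<or> trav_step p q) T" unfolding T_def
    by (rule successively_remdups_adjI)
  have "successively trav_step T"
    unfolding successively_conv_nth
  proof (intro allI impI)
    fix i assume i: "Suc i < length T"
    have "T ! i \<noteq> T ! Suc i" using remdups_adj_adjacent i unfolding T_def by blast
    then show "trav_step (T ! i) (T ! Suc i)" using successively_nth[OF s2 i] by blast
  qed
  moreover have "T \<noteq> []" "hd T = (0, 0)" "last T = (length t, l - 1)"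
    unfolding T_def using ne h lst by (auto simp: hd_map last_map)
  ultimately show "traversal (length (a # t)) l T"
    unfolding trav_iff using l0 by simp
  have nth: "(a # t) ! (i - 1) = (a # a # t) ! i" for i by (cases i) auto
  show "profile (a # t) l T = profile (a # a # t) l T'"
  proof (rule profile_cong)
    show "set (a # t) = set (a # a # t)" by simp
    fix j assume "j < l"
    have sT: "set T = (\<lambda>(i, j). (i - 1, j)) ` set T'" unfolding T_def by simp
    show "sector (a # t) T j = sector (a # a # t) T' j"
    proof (intro equalityI subsetI)
      fix v assume "v \<in> sector (a # t) T j"
      then obtain i where v: "v = (a # t) ! i" "(i, j) \<in> set T" unfolding sector_def by blast
      then obtain i' j' where "(i', j') \<in> set T'" "(i, j) = (i' - 1, j')" unfolding sT by auto
      then show "v \<in> sector (a # a # t) T' j" unfolding sector_def using v nth by auto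
    next
      fix v assume "v \<in> sector (a # a # t) T' j"
      then obtain i where v: "v = (a # a # t) ! i" "(i, j) \<in> set T'" unfolding sector_def by blast
      then have "(i - 1, j) \<in> set T" unfolding sT by force
      then show "v \<in> sector (a # t) T j" unfolding sector_def using v nth[of i] by (metis (mono_tags, lifting) mem_Collect_eq)
    qed
  qed
qed

lemma dup_profiles: "profiles (a # a # t) l = profiles (a # t) l"
proof
  show "profiles (a # a # t) l \<subseteq> profiles (a # t) l"
  proof
    fix p assume "p \<in> profiles (a # a # t) l"
    then obtain M where "traversal (length (a # a # t)) l M" "p = profile (a # a # t) l M"
      unfolding profiles_def by blast
    moreover note D = dup2[OF this(1)]
    ultimately have "p = profile (a # t) l (remdups_adj (map (\<lambda>(i, j). (i - 1, j)) M))" by simp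
    then show "p \<in> profiles (a # t) l" using D unfolding profiles_def by blast
  qed
  show "profiles (a # t) l \<subseteq> profiles (a # a # t) l"
  proof
    fix p assume "p \<in> profiles (a # t) l"
    then obtain M where "traversal (length (a # t)) l M" "p = profile (a # t) l M"
      unfolding profiles_def by blast
    moreover note D = dup1[OF this(1)]
    ultimately have "p = profile (a # a # t) l ((0, 0) # map (\<lambda>(i, j). (Suc i, j)) M)" by simp
    then show "p \<in> profiles (a # a # t) l" using D unfolding profiles_def by blast
  qed
qed

lemma rep_profiles: "profiles (a # replicate n a @ t) l = profiles (a # t) l"
proof (induction n)
  case 0 then show ?case by simp
next
  case (Suc n)
  have "profiles (a # replicate (Suc n) a @ t) l = profiles (a # a # (replicate n a @ t)) l" by (simp only: replicate_Suc append_Cons)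
  also have "\<dots> = profiles (a # (replicate n a @ t)) l" by (rule dup_profiles)
  also have "\<dots> = profiles (a # t) l" by (rule Suc.IH)
  finally show ?case .
qed

definition Kk :: "nat \<Rightarrow> real list \<Rightarrow> (nat \<times> nat) list set \<times> nat" where
  "Kk l x = (profiles x l, card (set x))"

definition PS :: "nat \<Rightarrow> nat \<Rightarrow> (nat \<times> nat) list set" where
  "PS r l = {p. length p = l \<and> set p \<subseteq> {0..r} \<times> {0..r}}"

definition Keys :: "nat \<Rightarrow> nat \<Rightarrow> ((nat \<times> nat) list set \<times> nat) set" where
  "Keys r l = Kk l ` {x. x \<noteq> [] \<and> card (set x) \<le> r}"

definition lenk :: "nat \<Rightarrow> (nat \<times> nat) list set \<times> nat \<Rightarrow> nat" where
  "lenk l k = (LEAST n. \<exists>z. z \<noteq> [] \<and> Kk l z = k \<and> length z = n)"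

definition ff :: "nat \<Rightarrow> nat \<Rightarrow> nat" where
  "ff r l = Max (lenk l ` Keys r l)"

lemma rank_le_card: "rank x z \<le> card (set x)"
  unfolding rank_def by (intro card_mono) auto

lemma profiles_sub: "card (set x) \<le> r \<Longrightarrow> profiles x l \<subseteq> PS r l"
  unfolding profiles_def PS_def profile_def
  using rank_le_card[of x] by (fastforce intro: le_trans)

lemma finite_PS: "finite (PS r l)"
proof -
  have "finite {p. set p \<subseteq> {0..r} \<times> {0..r} \<and> length p = l}"
    by (rule finite_lists_length_eq) simp
  then show ?thesis unfolding PS_def by (simp add: conj_commute)
qed

lemma finite_Keys: "finite (Keys r l)"
proof (rule finite_subset)
  show "Keys r l \<subseteq> Pow (PS r l) \<times> {0..r}"
    unfolding Keys_def Kk_def using profiles_sub by auto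
  show "finite (Pow (PS r l) \<times> {0..r})" using finite_PS by simp
qed

lemma rank_img: "rank x ` set x = {1..card (set x)}"
proof (rule card_subset_eq)
  show "finite {1..card (set x)}" by simp
  show "rank x ` set x \<subseteq> {1..card (set x)}" using rank_bounds by auto
  have "inj_on (rank x) (set x)" unfolding inj_on_def using rank_inj by blast
  then show "card (rank x ` set x) = card {1..card (set x)}" by (simp add: card_image)
qed

lemma iso:
  fixes z x :: "real list"
  assumes "card (set z) = card (set x)"
  shows "\<exists>g. (\<forall>a\<in>set z. \<forall>b\<in>set z. a < b \<longrightarrow> g a < g b) \<and> set (map g z) = set x"
proof -
  define g where "g w = invr (set x) (rank z w)" for w
  have gw: "g w \<in> set x \<and> rank x (g w) = rank z w" if "w \<in> set z" for w
  proof -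
    have "rank z w \<in> rank x ` set x" using rank_img[of z] rank_img[of x] assms that by auto
    then obtain u where "u \<in> set x" "rank x u = rank z w" by auto
    then show ?thesis unfolding g_def using invr_rank by metis
  qed
  have sm: "\<forall>a\<in>set z. \<forall>b\<in>set z. a < b \<longrightarrow> g a < g b"
  proof (intro ballI impI)
    fix a b assume ab: "a \<in> set z" "b \<in> set z" "a < b"
    then have "rank z a < rank z b" using rank_less_iff by blast
    then have "rank x (g a) < rank x (g b)" using gw ab by simp
    then show "g a < g b" using rank_less_iff gw ab by blast
  qed
  have "set (map g z) = set x"
  proof
    show "set (map g z) \<subseteq> set x" using gw by auto
    show "set x \<subseteq> set (map g z)"
    proof
      fix u assume u: "u \<in> set x"
      have "rank x u \<in> rank z ` set z" using rank_img[of z] rank_img[of x] assms u by auto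
      then obtain w where w: "w \<in> set z" "rank z w = rank x u" by auto
      then have "g w = u" unfolding g_def using invr_rank[OF u] by simp
      then show "u \<in> set (map g z)" using w by auto
    qed
  qed
  then show ?thesis using sm by blast
qed

lemma set_rep: "set (a # replicate n a @ t) = set (a # t)"
  by (induction n) auto

lemma main_ff:
  fixes x :: "real list"
  assumes x: "x \<noteq> [] \<and> card (set x) \<le> r"
  shows "\<exists>y. length y = ff r l \<and> profiles y l = profiles x l \<and> set x = set y \<and>
        (\<forall>q. length q = l \<longrightarrow> dF x q = dF y q)"
proof -
  have kin: "Kk l x \<in> Keys r l" unfolding Keys_def using x by blast
  have ex: "\<exists>n. \<exists>z. z \<noteq> [] \<and> Kk l z = Kk l x \<and> length z = n" using x by blast
  obtain z where z: "z \<noteq> []" "Kk l z = Kk l x" "length z = lenk l (Kk l x)"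
    using LeastI_ex[OF ex] unfolding lenk_def by blast
  have le: "length z \<le> ff r l" unfolding ff_def z(3)
    using finite_Keys kin by (intro Max_ge) auto
  have pz: "profiles z l = profiles x l" and cz: "card (set z) = card (set x)"
    using z(2) unfolding Kk_def by auto
  obtain g where g: "\<forall>a\<in>set z. \<forall>b\<in>set z. a < b \<longrightarrow> g a < g b" "set (map g z) = set x"
    using iso[OF cz] by blast
  define y0 where "y0 = map g z"
  have y0: "y0 \<noteq> []" "profiles y0 l = profiles x l" "set y0 = set x" "length y0 \<le> ff r l"
    using z(1) prof_map[OF g(1)] pz g(2) le unfolding y0_def by auto
  define a where "a = hd y0"
  define t where "t = tl y0"
  have y0e: "y0 = a # t" unfolding a_def t_def using y0(1) by simp
  define y where "y = a # replicate (ff r l - length y0) a @ t"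
  have ly: "length y = ff r l" unfolding y_def using y0(4) y0e by auto
  have "profiles y l = profiles (a # t) l" unfolding y_def by (rule rep_profiles)
  then have py: "profiles y l = profiles x l" using y0(2) y0e by simp
  have "set y = set (a # t)" unfolding y_def by (rule set_rep)
  then have sy: "set x = set y" using y0(3) y0e by simp
  show ?thesis
    using ly py sy dF_eq[OF sy py[symmetric]] by blast
qed

theorem lemma4p6:
  shows "\<exists>f :: nat \<Rightarrow> nat \<Rightarrow> nat. \<forall>r (x :: real list) l.
     x \<noteq> [] \<and> card (set x) \<le> r \<longrightarrow>
     (\<exists>y :: real list. length y = f r l \<and> profiles y l = profiles x l \<and> set x = set y \<and>
        (\<forall>q :: real list. length q = l \<longrightarrow> dF x q = dF y q))"
  by (intro exI[of _ ff] allI impI) (rule main_ff)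

end
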